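(* Every matroid $M$, regarded as the set system of its independent sets, belongs to the class $\mathfrak{J}_+$. That is, all coefficients $j_k$ ($0\le k\le t_M$) of its $J$-polynomial $J_M(u)=\sum_k j_ku^k$ are nonnegative.
   Context: A set system $\Omega$ on a finite set $E$ is a nonempty collection of subsets of $E$ (its faces). Define: - $d_\Omega=\max\{\#S:S\in\Omega\}$; - $f_i$ is the number of faces of size $i$; - $F_\Omega(z)=\sum_{i=0}^d f_iz^i$. Factor $F_\Omega(z)=(1+z)^{d-t}\widetilde F_\Omega(z)$ with $\widetilde F_\Omega(-1)\ne0$, where $t=t_\Omega=\deg\widetilde F_\Omega$. The $J$-polynomial is $J_\Omega(u)=(-2)^t\widetilde F_\Omega\big(\frac{-1-u}{2}\big)=\sum_{k=0}^t j_ku^k$. The class $\mathfrak{J}_+$ consists of the set systems with $j_k\ge0$ for all $0\le k\le t_\Omega$. *)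

theory Defs
  imports "HOL-Computational_Algebra.Polynomial"
begin

definition matroid :: "'a set \<Rightarrow> 'a set set \<Rightarrow> bool" where
  "matroid E \<I> \<longleftrightarrow> finite E \<and> \<I> \<subseteq> Pow E \<and> {} \<in> \<I> \<and>
     (\<forall>A B. B \<in> \<I> \<and> A \<subseteq> B \<longrightarrow> A \<in> \<I>) \<and>
     (\<forall>A B. A \<in> \<I> \<and> B \<in> \<I> \<and> card A < card B \<longrightarrow> (\<exists>x\<in>B - A. insert x A \<in> \<I>))"

definition set_system :: "'a set \<Rightarrow> 'a set set \<Rightarrow> bool" where
  "set_system E \<Omega> \<longleftrightarrow> finite E \<and> \<Omega> \<noteq> {} \<and> \<Omega> \<subseteq> Pow E"

definition ss_dim :: "'a set set \<Rightarrow> nat" where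
  "ss_dim \<Omega> = Max (card ` \<Omega>)"

definition ss_f :: "'a set set \<Rightarrow> nat \<Rightarrow> nat" where
  "ss_f \<Omega> i = card {S \<in> \<Omega>. card S = i}"

definition F_poly :: "'a set set \<Rightarrow> real poly" where
  "F_poly \<Omega> = (\<Sum>i\<le>ss_dim \<Omega>. monom (real (ss_f \<Omega> i)) i)"

text \<open>F(z) = (1+z)^(d-t) * Ftilde(z) with Ftilde(-1) \<noteq> 0; the exponent is the
  multiplicity of -1 as a root of F.\<close>
definition F_tilde :: "'a set set \<Rightarrow> real poly" where
  "F_tilde \<Omega> = F_poly \<Omega> div ([:1, 1:] ^ order (-1) (F_poly \<Omega>))"

definition ss_t :: "'a set set \<Rightarrow> nat" where
  "ss_t \<Omega> = degree (F_tilde \<Omega>)"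

definition J_poly :: "'a set set \<Rightarrow> real poly" where
  "J_poly \<Omega> = smult ((-2) ^ ss_t \<Omega>) (pcompose (F_tilde \<Omega>) [:-1/2, -1/2:])"

definition in_J_plus :: "'a set set \<Rightarrow> bool" where
  "in_J_plus \<Omega> \<longleftrightarrow> (\<forall>k\<le>ss_t \<Omega>. coeff (J_poly \<Omega>) k \<ge> 0)"

end

theory Submission imports Defs begin

definition Gp :: "'a set set \<Rightarrow> real poly" where
  "Gp I = (\<Sum>S\<in>I. smult ((-2) ^ (ss_dim I - card S)) ([:1,1:] ^ card S))"
definition dl :: "'a set set \<Rightarrow> 'a \<Rightarrow> 'a set set" where "dl I e = {S\<in>I. e \<notin> S}"
definition ct :: "'a set set \<Rightarrow> 'a \<Rightarrow> 'a set set" where "ct I e = {S. e \<notin> S \<and> insert e S \<in> I}"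
definition cfree :: "'a set set \<Rightarrow> bool" where
  "cfree I \<longleftrightarrow> (\<forall>f. \<exists>B\<in>I. card B = ss_dim I \<and> f \<notin> B)"

lemma mat_fin: assumes "matroid E I" shows "finite I" "finite E" "{} \<in> I" "I \<subseteq> Pow E"
proof -
  show "finite E" "{} \<in> I" "I \<subseteq> Pow E" using assms unfolding matroid_def by auto
  then show "finite I" by (meson finite_Pow_iff finite_subset)
qed

lemma mat_memfin: assumes "matroid E I" "S \<in> I" shows "finite S" "S \<subseteq> E"
proof -
  show "S \<subseteq> E" using assms mat_fin(4) by blast
  then show "finite S" using mat_fin(2)[OF assms(1)] finite_subset by blast
qed

lemma mat_sub: assumes "matroid E I" "S \<in> I" "T \<subseteq> S" shows "T \<in> I"
  using assms unfolding matroid_def by blast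

lemma mat_aug: assumes "matroid E I" "A \<in> I" "B \<in> I" "card A < card B"
  shows "\<exists>x\<in>B - A. insert x A \<in> I"
  using assms unfolding matroid_def by blast

lemma mat_le: assumes "matroid E I" "S \<in> I" shows "card S \<le> ss_dim I"
  unfolding ss_dim_def using assms mat_fin[OF assms(1)] by (auto intro: Max_ge)

lemma mat_basis: assumes "matroid E I" shows "\<exists>B\<in>I. card B = ss_dim I"
proof -
  have "ss_dim I \<in> card ` I" unfolding ss_dim_def using mat_fin[OF assms] by (intro Max_in) auto
  then show ?thesis by auto
qed

lemma mat_extend2:
  assumes "matroid E I" "S \<in> I" "B \<in> I" "card S \<le> card B"
  shows "\<exists>T\<in>I. S \<subseteq> T \<and> T \<subseteq> S \<union> B \<and> card T = card B"
  using assms(2,4)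
proof (induction "card B - card S" arbitrary: S)
  case 0
  then show ?case by auto
next
  case (Suc k)
  then have lt: "card S < card B" by auto
  then obtain x where x: "x \<in> B - S" "insert x S \<in> I" using mat_aug[OF assms(1) Suc(3) assms(3)] by auto
  have fS: "finite S" using mat_memfin[OF assms(1) Suc(3)] by auto
  have c: "card (insert x S) = Suc (card S)" using x fS by auto
  have k: "k = card B - card (insert x S)" using Suc(2) c by simp
  have le: "card (insert x S) \<le> card B" using c lt by simp
  obtain T where T: "T\<in>I" "insert x S \<subseteq> T" "T \<subseteq> insert x S \<union> B" "card T = card B"
    using Suc(1)[OF k x(2) le] by blast
  show ?case using T x by blast
qed

lemma mat_extend:
  assumes "matroid E I" "S \<in> I" shows "\<exists>B\<in>I. S \<subseteq> B \<and> card B = ss_dim I"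
proof -
  obtain B where B: "B \<in> I" "card B = ss_dim I" using mat_basis[OF assms(1)] by auto
  show ?thesis using mat_extend2[OF assms(1,2) B(1)] mat_le[OF assms] B(2) by auto
qed

lemma matroid_dl: assumes "matroid E I" shows "matroid (E - {e}) (dl I e)"
  unfolding matroid_def
proof (intro conjI allI impI)
  show "finite (E - {e})" using mat_fin[OF assms] by auto
  show "dl I e \<subseteq> Pow (E - {e})" using mat_fin(4)[OF assms] unfolding dl_def by auto
  show "{} \<in> dl I e" using mat_fin(3)[OF assms] unfolding dl_def by auto
  fix A B
  show "B \<in> dl I e \<and> A \<subseteq> B \<Longrightarrow> A \<in> dl I e" using mat_sub[OF assms] unfolding dl_def by blast
  assume h: "A \<in> dl I e \<and> B \<in> dl I e \<and> card A < card B"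
  then obtain x where "x \<in> B - A" "insert x A \<in> I" using mat_aug[OF assms] unfolding dl_def by blast
  then show "\<exists>x\<in>B - A. insert x A \<in> dl I e" using h unfolding dl_def by blast
qed

lemma matroid_ct: assumes "matroid E I" "{e} \<in> I" shows "matroid (E - {e}) (ct I e)"
  unfolding matroid_def
proof (intro conjI allI impI)
  show "finite (E - {e})" using mat_fin[OF assms(1)] by auto
  show "ct I e \<subseteq> Pow (E - {e})" using mat_fin(4)[OF assms(1)] unfolding ct_def by auto
  show "{} \<in> ct I e" using assms(2) unfolding ct_def by auto
  fix A B
  show "B \<in> ct I e \<and> A \<subseteq> B \<Longrightarrow> A \<in> ct I e" using mat_sub[OF assms(1)] unfolding ct_def
    by (metis (no_types, lifting) insert_mono mem_Collect_eq subsetD)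
  assume h: "A \<in> ct I e \<and> B \<in> ct I e \<and> card A < card B"
  then have fA: "finite A" "finite B" using mat_memfin[OF assms(1)] unfolding ct_def
    by (metis (no_types, lifting) finite_insert mem_Collect_eq)+
  have "card (insert e A) < card (insert e B)" using h fA unfolding ct_def by auto
  then obtain x where "x \<in> insert e B - insert e A" "insert x (insert e A) \<in> I"
    using mat_aug[OF assms(1)] h unfolding ct_def by blast
  then show "\<exists>x\<in>B - A. insert x A \<in> ct I e" using h unfolding ct_def
    by (metis (no_types, lifting) Diff_iff insert_commute insert_iff mem_Collect_eq)
qed

lemma dim_dl: assumes "matroid E I" "B \<in> I" "card B = ss_dim I" "e \<notin> B"
  shows "ss_dim (dl I e) = ss_dim I"
proof -
  have "B \<in> dl I e" using assms unfolding dl_def by auto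
  moreover have "finite (dl I e)" using mat_fin[OF assms(1)] unfolding dl_def by auto
  moreover have "ss_dim I \<in> card ` dl I e" using \<open>B \<in> dl I e\<close> assms(3) by (metis image_eqI)
  ultimately show ?thesis unfolding ss_dim_def
    using mat_le[OF assms(1)] unfolding dl_def ss_dim_def
    by (intro Max_eqI) auto
qed

lemma dim_ct: assumes "matroid E I" "{e} \<in> I"
  shows "ss_dim (ct I e) = ss_dim I - 1"
proof -
  obtain B where B: "B \<in> I" "{e} \<subseteq> B" "card B = ss_dim I" using mat_extend[OF assms] by auto
  have fB: "finite B" using mat_memfin[OF assms(1) B(1)] by auto
  have "B - {e} \<in> ct I e" using B unfolding ct_def by (auto simp: insert_absorb)
  moreover have "card (B - {e}) = ss_dim I - 1" using B fB by auto
  moreover have "finite (ct I e)" using mat_fin(1,2,4)[OF matroid_ct[OF assms]] by simp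
  moreover have "card S \<le> ss_dim I - 1" if "S \<in> ct I e" for S
  proof -
    have "insert e S \<in> I" "e \<notin> S" "finite S" using that mat_memfin[OF matroid_ct[OF assms]] unfolding ct_def by auto
    then show ?thesis using mat_le[OF assms(1), of "insert e S"] by auto
  qed
  moreover have "ss_dim I - 1 \<in> card ` ct I e" using \<open>B - {e} \<in> ct I e\<close> \<open>card (B - {e}) = ss_dim I - 1\<close> by (metis image_eqI)
  ultimately show ?thesis unfolding ss_dim_def by (intro Max_eqI) auto
qed
lemma aux: "smult ((-2) * c) P + smult c ([:1,1:] * P) = [:-1,1:] * smult (c::real) P"
proof -
  have e: "[:-1,1::real:] = [:1,1:] + [:-2:]" by simp
  have "[:-1,1:] * smult (c::real) P = [:1,1:] * smult c P + [:-2:] * smult c P"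
    by (subst e) (rule distrib_right)
  also have "\<dots> = smult c ([:1,1:] * P) + smult ((-2) * c) P"
    by (simp only: mult_smult_right) (simp add: mult_pCons_left mult.commute)
  finally show ?thesis by simp
qed

lemma G_split: assumes "matroid E I"
  shows "Gp I = (\<Sum>S\<in>dl I e. smult ((-2) ^ (ss_dim I - card S)) ([:1,1:] ^ card S))
     + (\<Sum>S\<in>ct I e. smult ((-2) ^ (ss_dim I - Suc (card S))) ([:1,1:] ^ Suc (card S)))"
proof -
  let ?h = "\<lambda>S. smult ((-2::real) ^ (ss_dim I - card S)) ([:1,1:] ^ card S)"
  have fI: "finite I" using mat_fin[OF assms] by auto
  have eq: "I = dl I e \<union> {S\<in>I. e \<in> S}" unfolding dl_def by auto
  have "Gp I = sum ?h (dl I e) + sum ?h {S\<in>I. e \<in> S}"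
    unfolding Gp_def by (subst eq, rule sum.union_disjoint) (use fI in \<open>auto simp: dl_def\<close>)
  moreover have "sum ?h {S\<in>I. e \<in> S} = (\<Sum>S\<in>ct I e. smult ((-2) ^ (ss_dim I - Suc (card S))) ([:1,1:] ^ Suc (card S)))"
  proof (rule sym, rule sum.reindex_bij_witness[where i="\<lambda>S. S - {e}" and j="insert e"])
    fix J assume "J \<in> ct I e"
    then have J: "e \<notin> J" "insert e J \<in> I" unfolding ct_def by auto
    then have "finite J" using mat_memfin[OF assms J(2)] by auto
    then show "?h (insert e J) = smult ((-2) ^ (ss_dim I - Suc (card J))) ([:1,1:] ^ Suc (card J))"
      using J by simp
    show "insert e J - {e} = J" using J by auto
    show "insert e J \<in> {S\<in>I. e \<in> S}" using J by auto
  next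
    fix S assume "S \<in> {S\<in>I. e \<in> S}"
    then show "insert e (S - {e}) = S" "S - {e} \<in> ct I e" unfolding ct_def by (auto simp: insert_absorb)
  qed
  ultimately show ?thesis by simp
qed

lemma G_nc: assumes "matroid E I" "{e} \<in> I" "B \<in> I" "card B = ss_dim I" "e \<notin> B"
  shows "Gp I = Gp (dl I e) + [:1,1:] * Gp (ct I e)"
proof -
  have d1: "ss_dim (dl I e) = ss_dim I" using dim_dl[OF assms(1,3,4,5)] .
  have d2: "ss_dim (ct I e) = ss_dim I - 1" using dim_ct[OF assms(1,2)] .
  have "(\<Sum>S\<in>ct I e. smult ((-2::real) ^ (ss_dim I - Suc (card S))) ([:1,1:] ^ Suc (card S)))
     = [:1,1:] * Gp (ct I e)"
    unfolding Gp_def d2 sum_distrib_left by (rule sum.cong) (auto simp: mult_smult_right)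
  then show ?thesis using G_split[OF assms(1), of e] unfolding Gp_def[of "dl I e"] d1 by simp
qed

lemma G_coloop: assumes "matroid E I" "\<forall>B\<in>I. card B = ss_dim I \<longrightarrow> e \<in> B"
  shows "Gp I = [:-1,1:] * Gp (dl I e)" "ss_dim (dl I e) = ss_dim I - 1" "ct I e = dl I e"
    "{e} \<in> I"
proof -
  obtain B where B: "B \<in> I" "card B = ss_dim I" using mat_basis[OF assms(1)] by auto
  have eB: "e \<in> B" using assms(2) B by auto
  show e1: "{e} \<in> I" using mat_sub[OF assms(1) B(1)] eB by auto
  have fB: "finite B" using mat_memfin[OF assms(1) B(1)] by auto
  have pos: "ss_dim I \<ge> 1" using B eB fB by (metis card_0_eq empty_iff less_one not_le)
  have le: "card S \<le> ss_dim I - 1" if "S \<in> dl I e" for S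
  proof -
    have "S \<in> I" "e \<notin> S" using that unfolding dl_def by auto
    then have "card S \<noteq> ss_dim I" using assms(2) by auto
    then show ?thesis using mat_le[OF assms(1) \<open>S\<in>I\<close>] by auto
  qed
  have "B - {e} \<in> dl I e" using mat_sub[OF assms(1) B(1)] unfolding dl_def by auto
  moreover have "card (B - {e}) = ss_dim I - 1" using B fB eB by auto
  moreover have "finite (dl I e)" using mat_fin[OF assms(1)] unfolding dl_def by auto
  moreover have "ss_dim I - 1 \<in> card ` dl I e" using calculation by (metis image_eqI)
  ultimately show d: "ss_dim (dl I e) = ss_dim I - 1" unfolding ss_dim_def using le unfolding ss_dim_def
    by (intro Max_eqI) auto
  show cd: "ct I e = dl I e"
  proof
    show "ct I e \<subseteq> dl I e" unfolding ct_def dl_def using mat_sub[OF assms(1)] by blast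
    show "dl I e \<subseteq> ct I e"
    proof
      fix S assume "S \<in> dl I e"
      then have S: "S \<in> I" "e \<notin> S" unfolding dl_def by auto
      obtain B' where "B' \<in> I" "S \<subseteq> B'" "card B' = ss_dim I" using mat_extend[OF assms(1) S(1)] by auto
      then have "insert e S \<subseteq> B'" "B' \<in> I" using assms(2) by auto
      then show "S \<in> ct I e" unfolding ct_def using S mat_sub[OF assms(1)] by blast
    qed
  qed
  have "Gp I = (\<Sum>S\<in>dl I e. smult ((-2) ^ (ss_dim I - card S)) ([:1,1:] ^ card S))
     + (\<Sum>S\<in>dl I e. smult ((-2) ^ (ss_dim I - Suc (card S))) ([:1,1:] ^ Suc (card S)))"
    using G_split[OF assms(1), of e] cd by simp
  also have "\<dots> = (\<Sum>S\<in>dl I e. [:-1,1:] * smult ((-2) ^ (ss_dim I - 1 - card S)) ([:1,1:] ^ card S))"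
    unfolding sum.distrib[symmetric]
  proof (rule sum.cong[OF refl])
    fix S assume "S \<in> dl I e"
    then have l: "card S \<le> ss_dim I - 1" by (rule le)
    then have x1: "ss_dim I - card S = Suc (ss_dim I - 1 - card S)" and x2: "ss_dim I - Suc (card S) = ss_dim I - 1 - card S"
      using pos by auto
    show "smult ((-2) ^ (ss_dim I - card S)) ([:1,1:] ^ card S) + smult ((-2) ^ (ss_dim I - Suc (card S))) ([:1,1:] ^ Suc (card S))
      = [:-1,1:] * smult ((-2::real) ^ (ss_dim I - 1 - card S)) ([:1,1:] ^ card S)"
      unfolding x1 x2 power_Suc by (rule aux)
  qed
  also have "\<dots> = [:-1,1:] * Gp (dl I e)" unfolding Gp_def d sum_distrib_left ..
  finally show "Gp I = [:-1,1:] * Gp (dl I e)" .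
qed

lemma sum_contain: assumes "matroid E I"
  shows "(\<Sum>S\<in>{S\<in>I. e \<in> S}. g S) = (\<Sum>J\<in>ct I e. g (insert e J))"
proof (rule sym, rule sum.reindex_bij_witness[where i="\<lambda>S. S - {e}" and j="insert e"])
  fix J assume "J \<in> ct I e"
  then have J: "e \<notin> J" "insert e J \<in> I" unfolding ct_def by auto
  show "g (insert e J) = g (insert e J)" ..
  show "insert e J - {e} = J" using J by auto
  show "insert e J \<in> {S\<in>I. e \<in> S}" using J by auto
next
  fix S assume "S \<in> {S\<in>I. e \<in> S}"
  then show "insert e (S - {e}) = S" "S - {e} \<in> ct I e" unfolding ct_def by (auto simp: insert_absorb)
qed

lemma pderiv_sum: "pderiv (sum f A) = (\<Sum>x\<in>A. pderiv (f x))"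
  by (cases "finite A", induction A rule: finite_induct) (auto simp: pderiv_add)

lemma G_pderiv: assumes "matroid E I"
  shows "pderiv (Gp I) = (\<Sum>e\<in>E. Gp (ct I e))"
proof -
  let ?c = "\<lambda>S. (-2::real) ^ (ss_dim I - card S)"
  let ?g = "\<lambda>S. smult (?c S) ([:1,1:] ^ (card S - 1))"
  have fI: "finite I" "finite E" using mat_fin[OF assms] by auto
  have pa: "pderiv [:1,1::real:] = 1" by (simp add: pderiv_pCons one_pCons)
  have "pderiv (Gp I) = (\<Sum>S\<in>I. (\<Sum>e\<in>{e\<in>E. e \<in> S}. ?g S))"
    unfolding Gp_def pderiv_sum
  proof (rule sum.cong[OF refl])
    fix S assume "S \<in> I"
    then have "{e\<in>E. e \<in> S} = S" using mat_memfin[OF assms] by auto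
    then show "pderiv (smult (?c S) ([:1,1:] ^ card S)) = (\<Sum>e\<in>{e\<in>E. e \<in> S}. ?g S)"
      by (simp add: pderiv_smult pderiv_power pa of_nat_poly mult_pCons_left mult.commute)
  qed
  also have "\<dots> = (\<Sum>e\<in>E. (\<Sum>S\<in>{S\<in>I. e \<in> S}. ?g S))"
    by (rule sum.swap_restrict[OF fI])
  also have "\<dots> = (\<Sum>e\<in>E. Gp (ct I e))"
  proof (rule sum.cong[OF refl])
    fix e assume "e \<in> E"
    show "(\<Sum>S\<in>{S\<in>I. e \<in> S}. ?g S) = Gp (ct I e)"
    proof (cases "{e} \<in> I")
      case True
      have d: "ss_dim (ct I e) = ss_dim I - 1" by (rule dim_ct[OF assms True])
      show ?thesis unfolding sum_contain[OF assms] Gp_def d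
      proof (rule sum.cong[OF refl])
        fix J assume "J \<in> ct I e"
        then have J: "e \<notin> J" "insert e J \<in> I" unfolding ct_def by auto
        then have "finite J" using mat_memfin[OF assms J(2)] by auto
        then show "?g (insert e J) = smult ((-2) ^ (ss_dim I - 1 - card J)) ([:1,1:] ^ card J)"
          using J by simp
      qed
    next
      case False
      have "{S\<in>I. e \<in> S} = {}" "ct I e = {}"
        using False mat_sub[OF assms] unfolding ct_def by blast+
      then show ?thesis unfolding Gp_def by (simp only: sum.empty)
    qed
  qed
  finally show ?thesis .
qed

lemma cfree_ct: assumes "matroid E I" "{e} \<in> I" "cfree I" shows "cfree (ct I e)"
  unfolding cfree_def
proof
  fix f
  have d: "ss_dim (ct I e) = ss_dim I - 1" by (rule dim_ct[OF assms(1,2)])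
  have "\<exists>B\<in>I. card B = ss_dim I \<and> e \<in> B \<and> (f \<notin> B \<or> f = e)"
  proof (cases "f = e")
    case True
    obtain B where "B \<in> I" "{e} \<subseteq> B" "card B = ss_dim I" using mat_extend[OF assms(1,2)] by auto
    then show ?thesis using True by auto
  next
    case False
    obtain B1 where B1: "B1 \<in> I" "card B1 = ss_dim I" "f \<notin> B1" using assms(3) unfolding cfree_def by auto
    obtain B2 where B2: "B2 \<in> I" "{e} \<subseteq> B2" "card B2 = ss_dim I" using mat_extend[OF assms(1,2)] by auto
    show ?thesis
    proof (cases "f \<in> B2")
      case False then show ?thesis using B2 by auto
    next
      case True
      have fB2: "finite B2" using mat_memfin[OF assms(1) B2(1)] by auto
      have A: "B2 - {f} \<in> I" using mat_sub[OF assms(1) B2(1)] by auto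
      have "card (B2 - {f}) < card B1" using True fB2 B1(2) B2(3)
        by (metis card_Diff1_less)
      then obtain x where x: "x \<in> B1 - (B2 - {f})" "insert x (B2 - {f}) \<in> I" using mat_aug[OF assms(1) A B1(1)] by auto
      have xf: "x \<noteq> f" "x \<notin> B2 - {f}" using x B1(3) by auto
      have "card (insert x (B2 - {f})) = ss_dim I" using xf True fB2 B2(3)
        by (metis card_Diff1_less card_Suc_Diff1 card_insert_disjoint finite_Diff)
      moreover have "e \<in> insert x (B2 - {f})" using B2(2) \<open>f \<noteq> e\<close> by auto
      moreover have "f \<notin> insert x (B2 - {f})" using xf by auto
      ultimately show ?thesis using x(2) by blast
    qed
  qed
  then obtain B where B: "B \<in> I" "card B = ss_dim I" "e \<in> B" "f \<notin> B \<or> f = e" by auto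
  have fB: "finite B" using mat_memfin[OF assms(1) B(1)] by auto
  have "B - {e} \<in> ct I e" using B unfolding ct_def by (auto simp: insert_absorb)
  moreover have "card (B - {e}) = ss_dim (ct I e)" using B fB d by auto
  moreover have "f \<notin> B - {e}" using B(4) by auto
  ultimately show "\<exists>B\<in>ct I e. card B = ss_dim (ct I e) \<and> f \<notin> B" by blast
qed

lemma N_eq: assumes "matroid E I" "cfree I" "B0 \<in> I" "card B0 = ss_dim I" "e \<notin> B0"
  and hf: "\<forall>B\<in>dl I e. card B = ss_dim (dl I e) \<longrightarrow> f \<in> B"
  shows "dl (ct I e) f = dl (dl I e) f"
proof
  show "dl (ct I e) f \<subseteq> dl (dl I e) f"
    unfolding dl_def ct_def using mat_sub[OF assms(1)] by blast
  show "dl (dl I e) f \<subseteq> dl (ct I e) f"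
  proof
    fix S assume "S \<in> dl (dl I e) f"
    then have S: "S \<in> I" "e \<notin> S" "f \<notin> S" unfolding dl_def by auto
    have d: "ss_dim (dl I e) = ss_dim I" by (rule dim_dl[OF assms(1,3,4,5)])
    obtain B1 where B1: "B1 \<in> I" "card B1 = ss_dim I" "f \<notin> B1" using assms(2) unfolding cfree_def by auto
    obtain T where T: "T \<in> I" "S \<subseteq> T" "T \<subseteq> S \<union> B1" "card T = card B1"
      using mat_extend2[OF assms(1) S(1) B1(1)] mat_le[OF assms(1) S(1)] B1(2) by auto
    have fT: "f \<notin> T" using T(3) S(3) B1(3) by auto
    have eT: "e \<in> T"
    proof (rule ccontr)
      assume "e \<notin> T"
      then have "T \<in> dl I e" using T(1) unfolding dl_def by auto
      then have "f \<in> T" using hf T(4) B1(2) d by auto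
      then show False using fT by auto
    qed
    have "insert e S \<in> I" using mat_sub[OF assms(1) T(1)] eT T(2) by auto
    then show "S \<in> dl (ct I e) f" using S unfolding dl_def ct_def by auto
  qed
qed

lemma loop_dl: assumes "matroid E I" "{f} \<notin> I" shows "dl I f = I"
  using assms mat_sub[OF assms(1)] unfolding dl_def by blast

lemma cf_nonneg: "matroid E I \<Longrightarrow> cfree I \<Longrightarrow> 0 \<le> coeff (Gp I) i"
proof (induction "card E" arbitrary: E I i rule: less_induct)
  case less
  have mE: "matroid E I" and cf: "cfree I" by fact+
  have fE: "finite E" using mat_fin[OF mE] by auto
  have ctok: "0 \<le> coeff (Gp (ct I e)) j" if "e \<in> E" "{e} \<in> I" for e j
    using less.hyps[of "E - {e}" "ct I e" j] matroid_ct[OF mE that(2)] cfree_ct[OF mE that(2) cf]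
      card_Diff1_less[OF fE that(1)] by blast
  show ?case
  proof (cases i)
    case (Suc j)
    have "coeff (pderiv (Gp I)) j = (\<Sum>e\<in>E. coeff (Gp (ct I e)) j)"
      unfolding G_pderiv[OF mE] coeff_sum ..
    also have "\<dots> \<ge> 0"
    proof (rule sum_nonneg)
      fix e assume "e \<in> E"
      show "0 \<le> coeff (Gp (ct I e)) j"
      proof (cases "{e} \<in> I")
        case True then show ?thesis using ctok \<open>e \<in> E\<close> by auto
      next
        case False
        then have "ct I e = {}" using mat_sub[OF mE] unfolding ct_def by blast
        then show ?thesis unfolding Gp_def by simp
      qed
    qed
    finally have "0 \<le> of_nat (Suc j) * coeff (Gp I) (Suc j)" unfolding coeff_pderiv .
    then show ?thesis using Suc by (simp add: zero_le_mult_iff)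
  next
    case 0
    show ?thesis
    proof (cases "\<exists>e\<in>E. {e} \<in> I")
      case False
      have "I = {{}}"
      proof
        show "{{}} \<subseteq> I" using mat_fin[OF mE] by auto
        show "I \<subseteq> {{}}"
        proof
          fix S assume "S \<in> I"
          show "S \<in> {{}}"
          proof (rule ccontr)
            assume "S \<notin> {{}}"
            then obtain x where "x \<in> S" by auto
            then have "{x} \<in> I" "x \<in> E" using mat_sub[OF mE \<open>S\<in>I\<close>] mat_memfin[OF mE \<open>S\<in>I\<close>] by auto
            then show False using False by auto
          qed
        qed
      qed
      then show ?thesis unfolding Gp_def ss_dim_def 0 by simp
    next
      case True
      then obtain e where e: "e \<in> E" "{e} \<in> I" by auto
      obtain B where B: "B \<in> I" "card B = ss_dim I" "e \<notin> B" using cf unfolding cfree_def by auto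
      have c0: "coeff (Gp I) 0 = coeff (Gp (dl I e)) 0 + coeff (Gp (ct I e)) 0"
        unfolding G_nc[OF mE e(2) B] by (simp add: coeff_mult_0)
      have c2: "0 \<le> coeff (Gp (ct I e)) 0" using ctok e by auto
      have mdl: "matroid (E - {e}) (dl I e)" by (rule matroid_dl[OF mE])
      have mct: "matroid (E - {e}) (ct I e)" by (rule matroid_ct[OF mE e(2)])
      have cfct: "cfree (ct I e)" by (rule cfree_ct[OF mE e(2) cf])
      have cE: "card (E - {e}) < card E" using card_Diff1_less[OF fE e(1)] .
      show ?thesis
      proof (cases "cfree (dl I e)")
        case True
        have "0 \<le> coeff (Gp (dl I e)) 0" using less.hyps[OF cE mdl True] .
        then show ?thesis unfolding 0 c0 using c2 by simp
      next
        case False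
        then obtain f where hf: "\<forall>B\<in>dl I e. card B = ss_dim (dl I e) \<longrightarrow> f \<in> B"
          unfolding cfree_def by auto
        let ?N = "dl (dl I e) f"
        have g1: "coeff (Gp (dl I e)) 0 = - coeff (Gp ?N) 0"
          unfolding G_coloop(1)[OF mdl hf] by (simp add: coeff_mult_0)
        have neq: "dl (ct I e) f = ?N" by (rule N_eq[OF mE cf B hf])
        show ?thesis
        proof (cases "{f} \<in> ct I e")
          case True
          obtain B' where B': "B' \<in> ct I e" "card B' = ss_dim (ct I e)" "f \<notin> B'"
            using cfct unfolding cfree_def by auto
          have g2: "coeff (Gp (ct I e)) 0 = coeff (Gp ?N) 0 + coeff (Gp (ct (ct I e) f)) 0"
            unfolding G_nc[OF mct True B'] neq by (simp add: coeff_mult_0)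
          have cE2: "card (E - {e} - {f}) < card E" using cE card_Diff1_le[of "E - {e}" f] fE by simp
          have "0 \<le> coeff (Gp (ct (ct I e) f)) 0"
            using less.hyps[OF cE2 matroid_ct[OF mct True] cfree_ct[OF mct True cfct]] .
          then show ?thesis unfolding 0 c0 g1 g2 by simp
        next
          case False
          have "ct I e = ?N" using loop_dl[OF mct False] neq by simp
          then show ?thesis unfolding 0 c0 g1 by simp
        qed
      qed
    qed
  qed
qed

lemma coeff_top: assumes "matroid E I" shows "coeff (Gp I) (ss_dim I) > 0"
proof -
  let ?r = "ss_dim I"
  have fI: "finite I" using mat_fin[OF assms] by auto
  have "coeff (Gp I) ?r = (\<Sum>S\<in>I. (if card S = ?r then 1 else 0))"
    unfolding Gp_def coeff_sum
  proof (rule sum.cong[OF refl])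
    fix S assume S: "S \<in> I"
    show "coeff (smult ((-2) ^ (?r - card S)) ([:1,1::real:] ^ card S)) ?r = (if card S = ?r then 1 else 0)"
    proof (cases "card S = ?r")
      case True
      have "coeff ([:1,1::real:] ^ ?r) ?r = 1" by (rule coeff_linear_power)
      then show ?thesis using True by simp
    next
      case False
      then have "card S < ?r" using mat_le[OF assms S] by auto
      then have "coeff ([:1,1::real:] ^ card S) ?r = 0"
        by (intro coeff_eq_0) (simp add: degree_linear_power)
      then show ?thesis using False by simp
    qed
  qed
  also have "\<dots> > 0"
  proof -
    obtain B where B: "B \<in> I" "card B = ?r" using mat_basis[OF assms] by auto
    have "(1::real) \<le> (\<Sum>S\<in>I. (if card S = ?r then 1 else 0))"
      using member_le_sum[of B I "\<lambda>S. if card S = ?r then (1::real) else 0"] B fI by auto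
    then show ?thesis by simp
  qed
  finally show ?thesis .
qed

lemma poly1_pos: assumes "\<forall>i. 0 \<le> coeff Q i" "coeff Q r > 0" shows "poly Q 1 > (0::real)"
proof -
  have r: "r \<le> degree Q" using assms(2) by (intro le_degree) auto
  have "coeff Q r \<le> (\<Sum>i\<le>degree Q. coeff Q i * 1 ^ i)"
    using member_le_sum[of r "{..degree Q}" "\<lambda>i. coeff Q i * 1 ^ i"] r assms(1) by auto
  then show ?thesis unfolding poly_altdef using assms(2) by simp
qed

lemma gen: "matroid E I \<Longrightarrow> \<exists>k Q. Gp I = [:-1,1:] ^ k * Q \<and> (\<forall>i. 0 \<le> coeff Q i) \<and> poly Q 1 > 0"
proof (induction "card E" arbitrary: E I rule: less_induct)
  case less
  have mE: "matroid E I" by fact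
  show ?case
  proof (cases "cfree I")
    case True
    have nn: "\<forall>i. 0 \<le> coeff (Gp I) i" using cf_nonneg[OF mE True] by auto
    have "poly (Gp I) 1 > 0" by (rule poly1_pos[OF nn coeff_top[OF mE]])
    then show ?thesis using nn by (intro exI[of _ 0] exI[of _ "Gp I"]) auto
  next
    case False
    then obtain f where hf: "\<forall>B\<in>I. card B = ss_dim I \<longrightarrow> f \<in> B" unfolding cfree_def by auto
    have "{f} \<in> I" by (rule G_coloop(4)[OF mE hf])
    then have fE: "f \<in> E" using mat_memfin[OF mE] by auto
    have cE: "card (E - {f}) < card E" using card_Diff1_less[OF _ fE] mat_fin[OF mE] by auto
    obtain k Q where kQ: "Gp (dl I f) = [:-1,1:] ^ k * Q" "\<forall>i. 0 \<le> coeff Q i" "poly Q 1 > 0"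
      using less.hyps[OF cE matroid_dl[OF mE]] by blast
    have "Gp I = [:-1,1:] ^ Suc k * Q" unfolding G_coloop(1)[OF mE hf] kQ(1) by (simp only: power_Suc mult.assoc)
    then show ?thesis using kQ by blast
  qed
qed

lemma of_nat_monom: "of_nat n * monom (1::real) i = monom (real n) i"
  by (induction n) (simp_all add: distrib_right add_monom)

lemma sum_monom_const: "finite A \<Longrightarrow> (\<Sum>S\<in>A. monom (1::real) i) = monom (real (card A)) i"
  by (simp add: of_nat_monom)

lemma F_sum: assumes "matroid E I" shows "F_poly I = (\<Sum>S\<in>I. monom 1 (card S))"
proof -
  have fI: "finite I" using mat_fin[OF assms] by auto
  have "(\<Sum>S\<in>I. monom (1::real) (card S)) = (\<Sum>i\<in>{..ss_dim I}. \<Sum>S\<in>{S\<in>I. card S = i}. monom 1 (card S))"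
    by (rule sum.group[symmetric]) (use fI mat_le[OF assms] in auto)
  also have "\<dots> = (\<Sum>i\<le>ss_dim I. monom (real (ss_f I i)) i)"
  proof (rule sum.cong[OF refl])
    fix i
    have "(\<Sum>S\<in>{S\<in>I. card S = i}. monom (1::real) (card S)) = (\<Sum>S\<in>{S\<in>I. card S = i}. monom 1 i)"
      by (rule sum.cong) auto
    also have "\<dots> = monom (real (ss_f I i)) i" unfolding ss_f_def
      by (rule sum_monom_const) (use fI in auto)
    finally show "(\<Sum>S\<in>{S\<in>I. card S = i}. monom (1::real) (card S)) = monom (real (ss_f I i)) i" .
  qed
  finally show ?thesis unfolding F_poly_def by simp
qed

lemma G_F: assumes "matroid E I"
  shows "Gp I = smult ((-2) ^ ss_dim I) (pcompose (F_poly I) [:-1/2, -1/2:])"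
proof -
  have "poly (Gp I) x = poly (smult ((-2) ^ ss_dim I) (pcompose (F_poly I) [:-1/2, -1/2:])) x" for x
  proof -
    have "poly (smult ((-2) ^ ss_dim I) (pcompose (F_poly I) [:-1/2, -1/2:])) x
        = (\<Sum>S\<in>I. (-2) ^ ss_dim I * (-1/2 - x/2) ^ card S)"
      unfolding F_sum[OF assms] by (simp add: poly_pcompose poly_sum poly_monom sum_distrib_left)
    also have "\<dots> = (\<Sum>S\<in>I. (-2) ^ (ss_dim I - card S) * (1 + x) ^ card S)"
    proof (rule sum.cong[OF refl])
      fix S assume "S \<in> I"
      then have le: "card S \<le> ss_dim I" by (rule mat_le[OF assms])
      have "(-2::real) ^ ss_dim I = (-2) ^ (ss_dim I - card S) * (-2) ^ card S"
        using le by (simp add: power_add[symmetric])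
      moreover have "(-2::real) ^ card S * (-1/2 - x/2) ^ card S = (1 + x) ^ card S"
        by (simp add: power_mult_distrib[symmetric] algebra_simps)
      ultimately show "(-2) ^ ss_dim I * (-1/2 - x/2) ^ card S = (-2) ^ (ss_dim I - card S) * (1 + x) ^ card S"
        by (simp add: mult.assoc)
    qed
    also have "\<dots> = poly (Gp I) x" unfolding Gp_def by (simp add: poly_sum poly_power)
    finally show ?thesis by simp
  qed
  then show ?thesis using poly_eq_poly_eq_iff by blast
qed

lemma F_coeff: "coeff (F_poly I) n = (if n \<le> ss_dim I then real (ss_f I n) else 0)"
  unfolding F_poly_def coeff_sum by (simp add: coeff_monom)

lemma F_degree: assumes "matroid E I" shows "degree (F_poly I) = ss_dim I"
proof (rule antisym)
  show "degree (F_poly I) \<le> ss_dim I" by (rule degree_le) (simp add: F_coeff)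
  obtain B where B: "B \<in> I" "card B = ss_dim I" using mat_basis[OF assms] by auto
  have "finite {S\<in>I. card S = ss_dim I}" using mat_fin[OF assms] by auto
  moreover have "B \<in> {S\<in>I. card S = ss_dim I}" using B by auto
  ultimately have "ss_f I (ss_dim I) \<noteq> 0" unfolding ss_f_def by (metis card_0_eq empty_iff)
  then show "ss_dim I \<le> degree (F_poly I)" by (intro le_degree) (simp add: F_coeff)
qed

lemma cancel_lin: assumes "[:-1,1:] ^ m * J = [:-1,1:] ^ k * (Q::real poly)" "poly J 1 \<noteq> 0" "poly Q 1 \<noteq> 0"
  shows "J = Q"
proof -
  have nz: "[:-1,1::real:] ^ n \<noteq> 0" for n by simp
  show ?thesis
  proof (cases "m \<le> k")
    case True
    then have "[:-1,1:] ^ m * J = [:-1,1:] ^ m * ([:-1,1:] ^ (k - m) * Q)"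
      using assms(1) by (simp add: mult.assoc[symmetric] power_add[symmetric])
    then have J: "J = [:-1,1:] ^ (k - m) * Q" using nz by simp
    then have "k - m = 0" using assms(2) by (cases "k - m") auto
    then show ?thesis using J by simp
  next
    case False
    then have "[:-1,1:] ^ k * Q = [:-1,1:] ^ k * ([:-1,1:] ^ (m - k) * J)"
      using assms(1) by (simp add: mult.assoc[symmetric] power_add[symmetric])
    then have Q: "Q = [:-1,1:] ^ (m - k) * J" using nz by simp
    then have "m - k = 0" using assms(3) by (cases "m - k") auto
    then show ?thesis using Q by simp
  qed
qed

theorem theorem6p4:
  fixes E :: "'a set" and \<I> :: "'a set set"
  assumes "matroid E \<I>"
  shows "in_J_plus \<I>"
proof -
  obtain k Q where kQ: "Gp \<I> = [:-1,1:] ^ k * Q" "\<forall>i. 0 \<le> coeff Q i" "poly Q 1 > 0"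
    using gen[OF assms] by blast
  let ?F = "F_poly \<I>"
  let ?m = "order (-1) ?F"
  let ?Ft = "F_tilde \<I>"
  let ?p = "[:-1/2, -1/2:] :: real poly"
  have "Q \<noteq> 0" using kQ(3) by auto
  then have "Gp \<I> \<noteq> 0" using kQ(1) by simp
  then have F0: "?F \<noteq> 0" using G_F[OF assms] by auto
  have dv: "[:1,1:] ^ ?m dvd ?F" using order_1[of "-1" ?F] by simp
  have Fe: "?F = [:1,1:] ^ ?m * ?Ft" unfolding F_tilde_def using dv by simp
  have Ft0: "?Ft \<noteq> 0" using F0 Fe by auto
  have Ftm1: "poly ?Ft (-1) \<noteq> 0"
  proof
    assume "poly ?Ft (-1) = 0"
    then have "[:1,1:] dvd ?Ft" using poly_eq_0_iff_dvd[of ?Ft "-1"] by simp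
    then have "[:1,1:] ^ ?m * [:1,1:] dvd [:1,1:] ^ ?m * ?Ft" by (intro mult_dvd_mono) simp_all
    then have "[:1,1:] ^ Suc ?m dvd ?F" using Fe by (simp only: power_Suc2)
    then show False using order_2[OF F0, of "-1"] by simp
  qed
  have deg: "ss_dim \<I> = ?m + ss_t \<I>"
    using F_degree[OF assms] Fe Ft0 unfolding ss_t_def
    by (metis degree_linear_power degree_mult_eq power_not_zero pCons_eq_0_iff zero_neq_one)
  have "poly (Gp \<I>) x = poly ([:-1,1:] ^ ?m * J_poly \<I>) x" for x
  proof -
    have "poly (Gp \<I>) x = (-2) ^ (?m + ss_t \<I>) * ((1 + (-1/2 - x/2)) ^ ?m * poly ?Ft (-1/2 - x/2))"
      unfolding G_F[OF assms] deg[symmetric]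
      by (subst Fe) (simp add: poly_pcompose poly_power)
    also have "\<dots> = ((-2) * (1 + (-1/2 - x/2))) ^ ?m * ((-2) ^ ss_t \<I> * poly ?Ft (-1/2 - x/2))"
      by (simp only: power_add power_mult_distrib mult_ac)
    also have "\<dots> = (x - 1) ^ ?m * ((-2) ^ ss_t \<I> * poly ?Ft (-1/2 - x/2))"
    proof -
      have e: "(-2::real) * (1 + (-1/2 - x/2)) = x - 1" by simp
      show ?thesis by (simp only: e)
    qed
    also have "\<dots> = poly ([:-1,1:] ^ ?m * J_poly \<I>) x"
      unfolding J_poly_def by (simp add: poly_pcompose poly_power algebra_simps)
    finally show ?thesis .
  qed
  then have "Gp \<I> = [:-1,1:] ^ ?m * J_poly \<I>" using poly_eq_poly_eq_iff by blast
  moreover have "poly (J_poly \<I>) 1 \<noteq> 0" unfolding J_poly_def using Ftm1 by (simp add: poly_pcompose)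
  ultimately have "J_poly \<I> = Q" using cancel_lin kQ by (metis less_irrefl)
  then show ?thesis unfolding in_J_plus_def using kQ(2) by simp
qed
end
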